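(* Let $(M,d)$ be a compact metric space and $\varphi:M\to M$ continuous. For all $\mathbb P\in\mathcal P_\varphi(M)$ and $\mathcal G=\{G_n\}\in\mathcal A(M)$, the limit $\mathcal G(\mathbb P)=\lim_{n\to\infty}n^{-1}\int G_n\,d\mathbb P$ exists and is finite, and for any approximating sequence $\{G^{(k)}\}$ of $\mathcal G$, $\mathcal G(\mathbb P)=\lim_{k\to\infty}\int G^{(k)}d\mathbb P$. Both convergences are uniform in $\mathbb P\in\mathcal P_\varphi(M)$, and $\mathbb P\mapsto\mathcal G(\mathbb P)$ is continuous on $\mathcal P_\varphi(M)$ with the weak topology.
   Context: $C(M),B(M)$: continuous/bounded Borel real functions with sup norm; $\mathcal P_\varphi(M)$: $\varphi$-invariant Borel probability measures; $S_nG=\sum_{k<n}G\circ\varphi^k$. $\mathcal A(M)$ is the set of $\{G_n\}\subset B(M)$ for which there is $\{G^{(k)}\}\subset C(M)$ (an approximating sequence) with $\lim_k\limsup_nn^{-1}\|G_n-S_nG^{(k)}\|_\infty=0$. *)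

theory Defs
  imports "HOL-Probability.Probability"
begin

definition supnorm :: "'a set \<Rightarrow> ('a \<Rightarrow> real) \<Rightarrow> real" where
  "supnorm M f = (SUP x\<in>M. \<bar>f x\<bar>)"

definition birkhoff_sum :: "('a \<Rightarrow> 'a) \<Rightarrow> nat \<Rightarrow> ('a \<Rightarrow> real) \<Rightarrow> 'a \<Rightarrow> real" where
  "birkhoff_sum \<phi> n G x = (\<Sum>k<n. G ((\<phi> ^^ k) x))"

definition bounded_borel :: "'a::metric_space set \<Rightarrow> ('a \<Rightarrow> real) set" where
  "bounded_borel M = {f. f \<in> borel_measurable (restrict_space borel M) \<and> bounded (f ` M)}"

definition approx_seq :: "'a::metric_space set \<Rightarrow> ('a \<Rightarrow> 'a) \<Rightarrow> (nat \<Rightarrow> 'a \<Rightarrow> real)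
    \<Rightarrow> (nat \<Rightarrow> 'a \<Rightarrow> real) \<Rightarrow> bool" where
  "approx_seq M \<phi> G Gk \<longleftrightarrow> (\<forall>k. continuous_on M (Gk k)) \<and>
     (\<lambda>k. limsup (\<lambda>n. ereal (supnorm M (\<lambda>x. G n x - birkhoff_sum \<phi> n (Gk k) x) / real n)))
       \<longlonglongrightarrow> 0"

definition class_A :: "'a::metric_space set \<Rightarrow> ('a \<Rightarrow> 'a) \<Rightarrow> (nat \<Rightarrow> 'a \<Rightarrow> real) set" where
  "class_A M \<phi> = {G. (\<forall>n. G n \<in> bounded_borel M) \<and> (\<exists>Gk. approx_seq M \<phi> G Gk)}"

definition borel_prob_measures :: "'a::metric_space set \<Rightarrow> 'a measure set" where
  "borel_prob_measures M = {P. prob_space P \<and> sets P = sets (restrict_space borel M)}"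

definition invariant_measures :: "'a::metric_space set \<Rightarrow> ('a \<Rightarrow> 'a) \<Rightarrow> 'a measure set" where
  "invariant_measures M \<phi> = {P \<in> borel_prob_measures M.
      \<forall>A\<in>sets P. emeasure P (\<phi> -` A \<inter> space P) = emeasure P A}"

definition weak_topology_meas :: "'a::metric_space set \<Rightarrow> 'a measure topology" where
  "weak_topology_meas M = topology_generated_by
     {{P. (\<integral>x. f x \<partial>P) \<in> U} | (f :: 'a \<Rightarrow> real) U. continuous_on M f \<and> open U}"

end

theory Submission
  imports Defs
begin

lemma inv_basic:
  assumes "P \<in> invariant_measures M \<phi>"
  shows "prob_space P" "sets P = sets (restrict_space borel M)" "space P = M"
proof -
  show "prob_space P" "sets P = sets (restrict_space borel M)"
    using assms by (auto simp: invariant_measures_def borel_prob_measures_def)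
  then show "space P = M"
    using sets_eq_imp_space_eq by (metis inf_top.right_neutral space_borel space_restrict_space)
qed

lemma inv_meas:
  assumes "P \<in> invariant_measures M \<phi>" "f \<in> borel_measurable (restrict_space borel M)"
  shows "f \<in> borel_measurable P"
  using assms inv_basic(2)[OF assms(1)] measurable_cong_sets by blast

lemma inv_integrable:
  fixes f :: "'a::metric_space \<Rightarrow> real"
  assumes "P \<in> invariant_measures M \<phi>" "f \<in> borel_measurable (restrict_space borel M)"
    "bounded (f ` M)"
  shows "integrable P f"
proof -
  interpret prob_space P using inv_basic[OF assms(1)] by simp
  obtain B where B: "\<And>x. x \<in> M \<Longrightarrow> norm (f x) \<le> B"
    using assms(3) by (auto simp: bounded_iff)
  then have B': "\<And>x. x \<in> M \<Longrightarrow> \<bar>f x\<bar> \<le> B" by simp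
  show ?thesis
    by (rule integrable_const_bound[where B=B])
       (auto simp: inv_basic[OF assms(1)] B' inv_meas[OF assms(1,2)] intro!: AE_I2)
qed

lemma cont_bounded:
  assumes "compact M" "continuous_on M f"
  shows "bounded (f ` M)"
  using assms compact_continuous_image compact_imp_bounded by blast

lemma inv_integrable_cont:
  fixes f :: "'a::metric_space \<Rightarrow> real"
  assumes "P \<in> invariant_measures M \<phi>" "compact M" "continuous_on M f"
  shows "integrable P f"
  using assms inv_integrable borel_measurable_continuous_on_restrict cont_bounded by blast

lemma funpow_props:
  assumes "continuous_on M \<phi>" "\<phi> ` M \<subseteq> M"
  shows "continuous_on M (\<phi> ^^ j) \<and> (\<phi> ^^ j) ` M \<subseteq> M"
proof (induction j)
  case 0
  then show ?case by (simp add: continuous_on_id)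
next
  case (Suc j)
  then show ?case using assms
    by (auto intro: continuous_on_compose2[of M \<phi> M "\<phi> ^^ j", simplified])
qed

lemma inv_step:
  fixes g :: "'a::metric_space \<Rightarrow> real"
  assumes "P \<in> invariant_measures M \<phi>" "continuous_on M \<phi>" "\<phi> ` M \<subseteq> M"
    "g \<in> borel_measurable (restrict_space borel M)"
  shows "(\<integral>x. g (\<phi> x) \<partial>P) = (\<integral>x. g x \<partial>P)"
proof -
  have sp: "space P = M" and st: "sets P = sets (restrict_space borel M)"
    using inv_basic[OF assms(1)] by auto
  have m1: "\<phi> \<in> borel_measurable (restrict_space borel M)"
    using assms(2) by (rule borel_measurable_continuous_on_restrict)
  have "\<phi> \<in> measurable (restrict_space borel M) (restrict_space borel M)"
    by (rule measurable_restrict_space2) (use assms(3) m1 in \<open>auto simp: space_restrict_space\<close>)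
  then have m: "\<phi> \<in> measurable P P"
    using st measurable_cong_sets by blast
  have d: "distr P P \<phi> = P"
  proof (rule measure_eqI)
    fix A assume "A \<in> sets (distr P P \<phi>)"
    then have "A \<in> sets P" by simp
    then show "emeasure (distr P P \<phi>) A = emeasure P A"
      using assms(1) m by (simp add: emeasure_distr invariant_measures_def)
  qed simp
  have g: "g \<in> borel_measurable P" using inv_meas[OF assms(1,4)] .
  have "(\<integral>x. g (\<phi> x) \<partial>P) = integral\<^sup>L (distr P P \<phi>) g"
    using integral_distr[OF m g] by simp
  then show ?thesis using d by simp
qed

lemma inv_iter:
  fixes g :: "'a::metric_space \<Rightarrow> real"
  assumes "P \<in> invariant_measures M \<phi>" "continuous_on M \<phi>" "\<phi> ` M \<subseteq> M"
    "continuous_on M g"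
  shows "(\<integral>x. g ((\<phi> ^^ j) x) \<partial>P) = (\<integral>x. g x \<partial>P)"
proof (induction j)
  case 0
  then show ?case by simp
next
  case (Suc j)
  have c: "continuous_on M (\<lambda>x. g ((\<phi> ^^ j) x))"
    using funpow_props[OF assms(2,3), of j] assms(4)
    by (auto intro: continuous_on_compose2[of M g M "\<phi> ^^ j"])
  have "(\<integral>x. g ((\<phi> ^^ Suc j) x) \<partial>P) = (\<integral>x. (\<lambda>y. g ((\<phi> ^^ j) y)) (\<phi> x) \<partial>P)"
    by (simp add: funpow_Suc_right del: funpow.simps)
  also have "\<dots> = (\<integral>x. g ((\<phi> ^^ j) x) \<partial>P)"
    using inv_step[OF assms(1,2,3) borel_measurable_continuous_on_restrict[OF c]] by simp
  finally show ?case using Suc by simp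
qed

lemma birkhoff_cont:
  assumes "continuous_on M \<phi>" "\<phi> ` M \<subseteq> M" "continuous_on M g"
  shows "continuous_on M (birkhoff_sum \<phi> n g)"
proof -
  have "\<And>j. continuous_on M (\<lambda>x. g ((\<phi> ^^ j) x))"
    using funpow_props[OF assms(1,2)] assms(3)
    by (auto intro: continuous_on_compose2[of M g M])
  then show ?thesis
    unfolding birkhoff_sum_def[abs_def] by (intro continuous_on_sum) auto
qed

lemma inv_birkhoff:
  assumes "P \<in> invariant_measures M \<phi>" "compact M" "continuous_on M \<phi>" "\<phi> ` M \<subseteq> M"
    "continuous_on M g"
  shows "(\<integral>x. birkhoff_sum \<phi> n g x \<partial>P) = real n * (\<integral>x. g x \<partial>P)"
proof -
  have "\<And>j. continuous_on M (\<lambda>x. g ((\<phi> ^^ j) x))"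
    using funpow_props[OF assms(3,4)] assms(5)
    by (auto intro: continuous_on_compose2[of M g M])
  then have "\<And>j. integrable P (\<lambda>x. g ((\<phi> ^^ j) x))"
    using inv_integrable_cont[OF assms(1,2)] by blast
  then have "(\<integral>x. birkhoff_sum \<phi> n g x \<partial>P) = (\<Sum>j<n. \<integral>x. g ((\<phi> ^^ j) x) \<partial>P)"
    unfolding birkhoff_sum_def by (simp add: integral_sum)
  also have "\<dots> = (\<Sum>j<n. \<integral>x. g x \<partial>P)"
    using inv_iter[OF assms(1,3,4,5)] by simp
  finally show ?thesis by simp
qed

lemma supnorm_bound:
  fixes h :: "'a::metric_space \<Rightarrow> real"
  assumes "P \<in> invariant_measures M \<phi>" "h \<in> borel_measurable (restrict_space borel M)"
    "bounded (h ` M)"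
  shows "\<bar>\<integral>x. h x \<partial>P\<bar> \<le> supnorm M h"
proof -
  interpret prob_space P using inv_basic[OF assms(1)] by simp
  have sp: "space P = M" using inv_basic[OF assms(1)] by simp
  have bd: "bdd_above ((\<lambda>x. \<bar>h x\<bar>) ` M)"
    using assms(3) by (auto simp: bounded_iff bdd_above_def) 
  have le: "\<And>x. x \<in> M \<Longrightarrow> \<bar>h x\<bar> \<le> supnorm M h"
    unfolding supnorm_def using bd by (rule cSUP_upper2) auto
  have "\<bar>\<integral>x. h x \<partial>P\<bar> \<le> (\<integral>x. \<bar>h x\<bar> \<partial>P)" by (rule integral_abs_bound)
  also have "\<dots> \<le> (\<integral>x. supnorm M h \<partial>P)"
    by (rule integral_mono) (use inv_integrable[OF assms] le sp in auto)
  finally have "\<bar>\<integral>x. h x \<partial>P\<bar> \<le> (\<integral>x. supnorm M h \<partial>P)" .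
  then show ?thesis by (simp add: prob_space)
qed

lemma core:
  fixes G Gk :: "nat \<Rightarrow> 'a::metric_space \<Rightarrow> real"
  assumes cM: "compact M" and cphi: "continuous_on M \<phi>" and phiM: "\<phi> ` M \<subseteq> M"
    and GB: "\<forall>n. G n \<in> bounded_borel M" and ap: "approx_seq M \<phi> G Gk" and e: "e > 0"
  shows "\<exists>K. \<forall>k\<ge>K. \<exists>N. \<forall>n\<ge>N. \<forall>P\<in>invariant_measures M \<phi>.
           \<bar>(\<integral>x. G n x \<partial>P) / real n - (\<integral>x. Gk k x \<partial>P)\<bar> < e"
proof -
  have cont: "\<And>k. continuous_on M (Gk k)" and
    lim: "(\<lambda>k. limsup (\<lambda>n. ereal (supnorm M (\<lambda>x. G n x - birkhoff_sum \<phi> n (Gk k) x) / real n)))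
       \<longlonglongrightarrow> 0"
    using ap by (auto simp: approx_seq_def)
  have "eventually (\<lambda>k. limsup (\<lambda>n. ereal (supnorm M (\<lambda>x. G n x - birkhoff_sum \<phi> n (Gk k) x) / real n)) < ereal e) sequentially"
    using order_tendstoD(2)[OF lim] e by simp
  then obtain K where K: "\<And>k. k \<ge> K \<Longrightarrow> limsup (\<lambda>n. ereal (supnorm M (\<lambda>x. G n x - birkhoff_sum \<phi> n (Gk k) x) / real n)) < ereal e"
    by (auto simp: eventually_sequentially)
  show ?thesis
  proof (rule exI[of _ K], intro allI impI)
    fix k assume "k \<ge> K"
    then have "eventually (\<lambda>n. ereal (supnorm M (\<lambda>x. G n x - birkhoff_sum \<phi> n (Gk k) x) / real n) < ereal e) sequentially"
      using K Limsup_lessD by blast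
    then obtain N where N: "\<And>n. n \<ge> N \<Longrightarrow> supnorm M (\<lambda>x. G n x - birkhoff_sum \<phi> n (Gk k) x) / real n < e"
      by (auto simp: eventually_sequentially)
    show "\<exists>N. \<forall>n\<ge>N. \<forall>P\<in>invariant_measures M \<phi>.
           \<bar>(\<integral>x. G n x \<partial>P) / real n - (\<integral>x. Gk k x \<partial>P)\<bar> < e"
    proof (rule exI[of _ "max N 1"], intro allI impI ballI)
      fix n P assume n: "max N 1 \<le> n" and P: "P \<in> invariant_measures M \<phi>"
      have npos: "real n > 0" using n by simp
      have bc: "continuous_on M (birkhoff_sum \<phi> n (Gk k))"
        by (rule birkhoff_cont[OF cphi phiM cont])
      have Gm: "G n \<in> borel_measurable (restrict_space borel M)" and Gb: "bounded (G n ` M)"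
        using GB by (auto simp: bounded_borel_def)
      have bm: "birkhoff_sum \<phi> n (Gk k) \<in> borel_measurable (restrict_space borel M)"
        by (rule borel_measurable_continuous_on_restrict[OF bc])
      have hm: "(\<lambda>x. G n x - birkhoff_sum \<phi> n (Gk k) x) \<in> borel_measurable (restrict_space borel M)"
        using Gm bm by measurable
      have hb: "bounded ((\<lambda>x. G n x - birkhoff_sum \<phi> n (Gk k) x) ` M)"
        by (rule bounded_minus_comp[OF Gb cont_bounded[OF cM bc]])
      have iG: "integrable P (G n)" by (rule inv_integrable[OF P Gm Gb])
      have iB: "integrable P (birkhoff_sum \<phi> n (Gk k))" by (rule inv_integrable_cont[OF P cM bc])
      have eq: "(\<integral>x. G n x - birkhoff_sum \<phi> n (Gk k) x \<partial>P) = (\<integral>x. G n x \<partial>P) - real n * (\<integral>x. Gk k x \<partial>P)"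
        using Bochner_Integration.integral_diff[OF iG iB] inv_birkhoff[OF P cM cphi phiM cont] by simp
      have bd: "\<bar>\<integral>x. G n x - birkhoff_sum \<phi> n (Gk k) x \<partial>P\<bar> \<le> supnorm M (\<lambda>x. G n x - birkhoff_sum \<phi> n (Gk k) x)"
        by (rule supnorm_bound[OF P hm hb])
      have "(\<integral>x. G n x \<partial>P) / real n - (\<integral>x. Gk k x \<partial>P) = (\<integral>x. G n x - birkhoff_sum \<phi> n (Gk k) x \<partial>P) / real n"
        using npos by (simp add: eq field_simps)
      then have "\<bar>(\<integral>x. G n x \<partial>P) / real n - (\<integral>x. Gk k x \<partial>P)\<bar> = \<bar>\<integral>x. G n x - birkhoff_sum \<phi> n (Gk k) x \<partial>P\<bar> / real n"
        using npos by simp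
      also have "\<dots> \<le> supnorm M (\<lambda>x. G n x - birkhoff_sum \<phi> n (Gk k) x) / real n"
        using bd npos by (simp add: divide_right_mono)
      also have "\<dots> < e" using N n by simp
      finally have X: "\<bar>(\<integral>x. G n x \<partial>P) / real n - (\<integral>x. Gk k x \<partial>P)\<bar> < e" .
      show "\<bar>(\<integral>x. G n x \<partial>P) / real n - (\<integral>x. Gk k x \<partial>P)\<bar> < e" by (rule X)
    qed
  qed
qed

theorem lemma2p3:
  fixes M :: "'a::metric_space set" and \<phi> :: "'a \<Rightarrow> 'a" and G :: "nat \<Rightarrow> 'a \<Rightarrow> real"
  assumes "compact M" and "continuous_on M \<phi>" and "\<phi> ` M \<subseteq> M"
    and "G \<in> class_A M \<phi>"
  defines "GP \<equiv> (\<lambda>P. lim (\<lambda>n. (\<integral>x. G n x \<partial>P) / real n))"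
  shows "(\<forall>P\<in>invariant_measures M \<phi>. (\<lambda>n. (\<integral>x. G n x \<partial>P) / real n) \<longlonglongrightarrow> GP P)
    \<and> (\<forall>e>0. \<exists>N. \<forall>n\<ge>N. \<forall>P\<in>invariant_measures M \<phi>.
          \<bar>(\<integral>x. G n x \<partial>P) / real n - GP P\<bar> < e)
    \<and> (\<forall>Gk. approx_seq M \<phi> G Gk \<longrightarrow>
          (\<forall>P\<in>invariant_measures M \<phi>. (\<lambda>k. \<integral>x. Gk k x \<partial>P) \<longlonglongrightarrow> GP P)
        \<and> (\<forall>e>0. \<exists>K. \<forall>k\<ge>K. \<forall>P\<in>invariant_measures M \<phi>.
          \<bar>(\<integral>x. Gk k x \<partial>P) - GP P\<bar> < e))
    \<and> continuous_map (subtopology (weak_topology_meas M) (invariant_measures M \<phi>)) euclideanreal GP"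
proof -
  let ?I = "invariant_measures M \<phi>"
  define a where "a n P = (\<integral>x. G n x \<partial>P) / real n" for n P
  obtain Gk0 where GB: "\<forall>n. G n \<in> bounded_borel M" and ap0: "approx_seq M \<phi> G Gk0"
    using assms(4) by (auto simp: class_A_def)
  note cr = core[OF assms(1,2,3) GB]
  have cauchy: "\<forall>e>0. \<exists>N. \<forall>n\<ge>N. \<forall>m\<ge>N. \<forall>P\<in>?I. \<bar>a n P - a m P\<bar> < e"
  proof (intro allI impI)
    fix e :: real assume e: "e > 0"
    obtain K where K: "\<forall>k\<ge>K. \<exists>N. \<forall>n\<ge>N. \<forall>P\<in>?I.
           \<bar>(\<integral>x. G n x \<partial>P) / real n - (\<integral>x. Gk0 k x \<partial>P)\<bar> < e/2"
      using cr[OF ap0, of "e/2"] e by auto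
    then obtain N where N: "\<forall>n\<ge>N. \<forall>P\<in>?I. \<bar>a n P - (\<integral>x. Gk0 K x \<partial>P)\<bar> < e/2"
      unfolding a_def by blast
    show "\<exists>N. \<forall>n\<ge>N. \<forall>m\<ge>N. \<forall>P\<in>?I. \<bar>a n P - a m P\<bar> < e"
    proof (rule exI[of _ N], intro allI impI ballI)
      fix n m P assume "n \<ge> N" "m \<ge> N" "P \<in> ?I"
      then have "\<bar>a n P - (\<integral>x. Gk0 K x \<partial>P)\<bar> < e/2" "\<bar>a m P - (\<integral>x. Gk0 K x \<partial>P)\<bar> < e/2"
        using N by auto
      then show "\<bar>a n P - a m P\<bar> < e" by linarith
    qed
  qed
  have GPa: "GP P = lim (\<lambda>n. a n P)" for P unfolding GP_def a_def by simp
  have conv: "(\<lambda>n. a n P) \<longlonglongrightarrow> GP P" if P: "P \<in> ?I" for P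
  proof -
    have "Cauchy (\<lambda>n. a n P)"
    proof (rule metric_CauchyI)
      fix e :: real assume "e > 0"
      then obtain N where "\<forall>n\<ge>N. \<forall>m\<ge>N. \<forall>P\<in>?I. \<bar>a n P - a m P\<bar> < e" using cauchy by blast
      then show "\<exists>N. \<forall>m\<ge>N. \<forall>n\<ge>N. dist (a m P) (a n P) < e"
        using P by (auto simp: dist_real_def)
    qed
    then show ?thesis unfolding GPa using Cauchy_convergent_iff convergent_LIMSEQ_iff by blast
  qed
  have unif: "\<forall>e>0. \<exists>N. \<forall>n\<ge>N. \<forall>P\<in>?I. \<bar>a n P - GP P\<bar> < e"
  proof (intro allI impI)
    fix e :: real assume e: "e > 0"
    then obtain N where N: "\<forall>n\<ge>N. \<forall>m\<ge>N. \<forall>P\<in>?I. \<bar>a n P - a m P\<bar> < e/2"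
      using cauchy by (meson half_gt_zero)
    show "\<exists>N. \<forall>n\<ge>N. \<forall>P\<in>?I. \<bar>a n P - GP P\<bar> < e"
    proof (rule exI[of _ N], intro allI impI ballI)
      fix n P assume n: "n \<ge> N" and P: "P \<in> ?I"
      have "(\<lambda>m. \<bar>a n P - a m P\<bar>) \<longlonglongrightarrow> \<bar>a n P - GP P\<bar>"
        by (intro tendsto_intros conv[OF P])
      moreover have "\<exists>N'. \<forall>m\<ge>N'. \<bar>a n P - a m P\<bar> \<le> e/2"
        using N n P by (auto intro!: exI[of _ N] less_imp_le)
      ultimately have "\<bar>a n P - GP P\<bar> \<le> e/2" by (rule LIMSEQ_le_const2)
      then show "\<bar>a n P - GP P\<bar> < e" using e by linarith
    qed
  qed
  have approx: "\<forall>e>0. \<exists>K. \<forall>k\<ge>K. \<forall>P\<in>?I. \<bar>(\<integral>x. Gk k x \<partial>P) - GP P\<bar> < e"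
    if ap: "approx_seq M \<phi> G Gk" for Gk
  proof (intro allI impI)
    fix e :: real assume e: "e > 0"
    obtain K where K: "\<forall>k\<ge>K. \<exists>N. \<forall>n\<ge>N. \<forall>P\<in>?I.
           \<bar>(\<integral>x. G n x \<partial>P) / real n - (\<integral>x. Gk k x \<partial>P)\<bar> < e/2"
      using cr[OF ap, of "e/2"] e by auto
    show "\<exists>K. \<forall>k\<ge>K. \<forall>P\<in>?I. \<bar>(\<integral>x. Gk k x \<partial>P) - GP P\<bar> < e"
    proof (rule exI[of _ K], intro allI impI ballI)
      fix k P assume k: "k \<ge> K" and P: "P \<in> ?I"
      obtain N where N: "\<forall>n\<ge>N. \<forall>P\<in>?I. \<bar>a n P - (\<integral>x. Gk k x \<partial>P)\<bar> < e/2"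
        using K k unfolding a_def by blast
      have "(\<lambda>n. \<bar>a n P - (\<integral>x. Gk k x \<partial>P)\<bar>) \<longlonglongrightarrow> \<bar>GP P - (\<integral>x. Gk k x \<partial>P)\<bar>"
        by (intro tendsto_intros conv[OF P])
      moreover have "\<exists>N'. \<forall>n\<ge>N'. \<bar>a n P - (\<integral>x. Gk k x \<partial>P)\<bar> \<le> e/2"
        using N P by (auto intro!: exI[of _ N] less_imp_le)
      ultimately have "\<bar>GP P - (\<integral>x. Gk k x \<partial>P)\<bar> \<le> e/2" by (rule LIMSEQ_le_const2)
      then show "\<bar>(\<integral>x. Gk k x \<partial>P) - GP P\<bar> < e" using e by linarith
    qed
  qed
  have part3: "(\<forall>P\<in>?I. (\<lambda>k. \<integral>x. Gk k x \<partial>P) \<longlonglongrightarrow> GP P)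
        \<and> (\<forall>e>0. \<exists>K. \<forall>k\<ge>K. \<forall>P\<in>?I. \<bar>(\<integral>x. Gk k x \<partial>P) - GP P\<bar> < e)"
    if ap: "approx_seq M \<phi> G Gk" for Gk
  proof (intro conjI ballI)
    fix P assume P: "P \<in> ?I"
    show "(\<lambda>k. \<integral>x. Gk k x \<partial>P) \<longlonglongrightarrow> GP P"
      unfolding LIMSEQ_iff real_norm_def
    proof (intro allI impI)
      fix r :: real assume "r > 0"
      then obtain K where "\<forall>k\<ge>K. \<forall>P\<in>?I. \<bar>(\<integral>x. Gk k x \<partial>P) - GP P\<bar> < r"
        using approx[OF ap] by blast
      then show "\<exists>no. \<forall>n\<ge>no. \<bar>(\<integral>x. Gk n x \<partial>P) - GP P\<bar> < r" using P by blast
    qed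
  qed (use approx[OF ap] in blast)
  have cont: "continuous_map (subtopology (weak_topology_meas M) ?I) euclideanreal GP"
  proof -
    define S where "S = {{P. (\<integral>x. f x \<partial>P) \<in> U} | (f :: 'a \<Rightarrow> real) U. continuous_on M f \<and> open U}"
    have W: "weak_topology_meas M = topology_generated_by S"
      unfolding S_def weak_topology_meas_def by simp
    have opS: "openin (weak_topology_meas M) {P. (\<integral>x. f x \<partial>P) \<in> U}"
      if "continuous_on M f" "open U" for f :: "'a \<Rightarrow> real" and U
      unfolding W openin_topology_generated_by_iff
      by (rule generate_topology_on.Basis) (use that in \<open>auto simp: S_def\<close>)
    have "UNIV \<in> S" unfolding S_def
      by (rule CollectI, rule exI[of _ "\<lambda>_. 0"], rule exI[of _ UNIV]) auto
    then have top: "topspace (weak_topology_meas M) = UNIV" unfolding W by auto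
    have contk: "\<And>k. continuous_on M (Gk0 k)" using ap0 by (simp add: approx_seq_def)
    show ?thesis
      unfolding continuous_map_def
    proof (intro conjI allI impI)
      show "GP \<in> topspace (subtopology (weak_topology_meas M) ?I) \<rightarrow> topspace euclideanreal" by simp
      fix U :: "real set" assume "openin euclideanreal U"
      then have U: "open U" by simp
      show "openin (subtopology (weak_topology_meas M) ?I)
          {x \<in> topspace (subtopology (weak_topology_meas M) ?I). GP x \<in> U}"
      proof (subst openin_subopen, intro ballI)
        fix x assume x: "x \<in> {x \<in> topspace (subtopology (weak_topology_meas M) ?I). GP x \<in> U}"
        then have xI: "x \<in> ?I" and xU: "GP x \<in> U" by (auto simp: top)
        obtain \<epsilon> where eps: "\<epsilon> > 0" "ball (GP x) \<epsilon> \<subseteq> U"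
          using U xU open_contains_ball by blast
        obtain K where K: "\<forall>k\<ge>K. \<forall>P\<in>?I. \<bar>(\<integral>y. Gk0 k y \<partial>P) - GP P\<bar> < \<epsilon>/3"
          using approx[OF ap0] eps(1) by (meson divide_pos_pos zero_less_numeral)
        define T where "T = ?I \<inter> {P. (\<integral>y. Gk0 K y \<partial>P) \<in> ball (\<integral>y. Gk0 K y \<partial>x) (\<epsilon>/3)}"
        show "\<exists>T. openin (subtopology (weak_topology_meas M) ?I) T \<and> x \<in> T \<and>
               T \<subseteq> {x \<in> topspace (subtopology (weak_topology_meas M) ?I). GP x \<in> U}"
        proof (intro exI[of _ T] conjI)
          show "openin (subtopology (weak_topology_meas M) ?I) T"
            unfolding T_def by (rule openin_subtopology_Int2, rule opS[OF contk]) simp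
          show "x \<in> T" unfolding T_def using xI eps(1) by simp
          show "T \<subseteq> {x \<in> topspace (subtopology (weak_topology_meas M) ?I). GP x \<in> U}"
          proof
            fix y assume y: "y \<in> T"
            then have yI: "y \<in> ?I" and d: "\<bar>(\<integral>z. Gk0 K z \<partial>y) - (\<integral>z. Gk0 K z \<partial>x)\<bar> < \<epsilon>/3"
              by (auto simp: T_def dist_real_def abs_minus_commute)
            have "\<bar>(\<integral>z. Gk0 K z \<partial>y) - GP y\<bar> < \<epsilon>/3" "\<bar>(\<integral>z. Gk0 K z \<partial>x) - GP x\<bar> < \<epsilon>/3"
              using K yI xI by auto
            then have "\<bar>GP y - GP x\<bar> < \<epsilon>" using d by linarith
            then have "GP y \<in> ball (GP x) \<epsilon>" by (simp add: dist_real_def abs_minus_commute)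
            then show "y \<in> {x \<in> topspace (subtopology (weak_topology_meas M) ?I). GP x \<in> U}"
              using eps(2) yI by (auto simp: top)
          qed
        qed
      qed
    qed
  qed
  show ?thesis
    using conv unif part3 cont unfolding a_def by blast
qed

end
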